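(* Let $x>0$ and $p\in\mathbb{R}$. (i) If $p\in[0,1/2]$, then $W_p(x,1)\ge \hat{A}_p(x,1)$. (ii) If $p\notin(0,1/2)$, then $W_p(x,1)\le \hat{A}_p(x,1)$.
   Context: For $x>0$, $x\ne 1$ and $p\ne 0$: $\hat{A}_p(x,1)=\frac{p(x^p+1)(x-1)}{2(x^p-1)}$, with $\hat A_p(1,1)=1$ and $\hat{A}_0(x,1)=\frac{x-1}{\log x}$ (limiting value). The Wigner--Yanase--Dyson function for $p\in\mathbb{R}\setminus\{0,1\}$, $x\ne 1$ is $W_p(x,1)=\frac{p(1-p)(x-1)^2}{(x^p-1)(x^{1-p}-1)}$, with $W_p(1,1)=1$ and $W_0(x,1)=W_1(x,1)=\frac{x-1}{\log x}$ (limiting value). *)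

theory Defs
  imports Complex_Main
begin

text \<open>Power difference mean A-hat_p(x,1), with limiting values at x = 1 and p = 0.\<close>
definition Ahat :: "real \<Rightarrow> real \<Rightarrow> real" where
  "Ahat p x =
     (if x = 1 then 1
      else if p = 0 then (x - 1) / ln x
      else p * (x powr p + 1) * (x - 1) / (2 * (x powr p - 1)))"

text \<open>Wigner-Yanase-Dyson function W_p(x,1), with limiting values at x = 1 and p = 0, 1.\<close>
definition WYD :: "real \<Rightarrow> real \<Rightarrow> real" where
  "WYD p x =
     (if x = 1 then 1
      else if p = 0 \<or> p = 1 then (x - 1) / ln x
      else p * (1 - p) * (x - 1)^2 / ((x powr p - 1) * (x powr (1 - p) - 1)))"

end

theory Submission
  imports Defs
begin

lemma key1:
  fixes q v :: real assumes "v \<ge> 0" "0 \<le> q" "q \<le> 1"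
  shows "sinh (q*v) \<le> q * sinh v"
proof -
  let ?f = "\<lambda>t::real. q * sinh t - sinh (q*t)"
  have "?f 0 \<le> ?f v"
  proof (rule DERIV_nonneg_imp_nondecreasing[OF assms(1)])
    fix t :: real assume t: "0 \<le> t" "t \<le> v"
    have "(?f has_real_derivative (q * cosh t - cosh (q*t) * q)) (at t)"
      by (auto intro!: derivative_eq_intros)
    moreover have "cosh (q*t) \<le> cosh t"
      using t assms by (subst cosh_real_nonneg_le_iff) (auto simp: mult_left_le_one_le)
    hence "0 \<le> q * cosh t - cosh (q*t) * q" using assms by (simp add: algebra_simps mult_left_mono)
    ultimately show "\<exists>y. (?f has_real_derivative y) (at t) \<and> 0 \<le> y" by blast
  qed
  thus ?thesis by simp
qed

lemma key2:
  fixes q v :: real assumes "v \<ge> 0" "1 \<le> q"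
  shows "q * sinh v \<le> sinh (q*v)"
proof -
  let ?f = "\<lambda>t::real. sinh (q*t) - q * sinh t"
  have "?f 0 \<le> ?f v"
  proof (rule DERIV_nonneg_imp_nondecreasing[OF assms(1)])
    fix t :: real assume t: "0 \<le> t" "t \<le> v"
    have "(?f has_real_derivative (cosh (q*t) * q - q * cosh t)) (at t)"
      by (auto intro!: derivative_eq_intros)
    moreover have "cosh t \<le> cosh (q*t)"
      using t assms by (subst cosh_real_nonneg_le_iff) (auto simp: mult_le_cancel_right1)
    hence "0 \<le> cosh (q*t) * q - q * cosh t" using assms by (simp add: algebra_simps mult_left_mono)
    ultimately show "\<exists>y. (?f has_real_derivative y) (at t) \<and> 0 \<le> y" by blast
  qed
  thus ?thesis by simp
qed

lemma key3:
  fixes v :: real assumes "v \<ge> 0"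
  shows "sinh v \<le> v * cosh v"
proof -
  let ?f = "\<lambda>t::real. t * cosh t - sinh t"
  have "?f 0 \<le> ?f v"
  proof (rule DERIV_nonneg_imp_nondecreasing[OF assms(1)])
    fix t :: real assume t: "0 \<le> t" "t \<le> v"
    have "(?f has_real_derivative (t * sinh t)) (at t)"
      by (auto intro!: derivative_eq_intros)
    moreover have "0 \<le> t * sinh t" using t by simp
    ultimately show "\<exists>y. (?f has_real_derivative y) (at t) \<and> 0 \<le> y" by blast
  qed
  thus ?thesis by simp
qed

lemma Dsign1:
  fixes q u :: real assumes "0 \<le> q" "q \<le> 1"
  shows "u * (sinh (q*u) - q * sinh u) \<le> 0"
proof (cases "u \<ge> 0")
  case True thus ?thesis using key1[OF True assms] by (simp add: mult_nonneg_nonpos)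
next
  case False
  hence "-u \<ge> 0" by simp
  from key1[OF this assms] False show ?thesis by (simp add: mult_nonpos_nonneg)
qed

lemma Dsign2:
  fixes q u :: real assumes "1 \<le> q"
  shows "u * (sinh (q*u) - q * sinh u) \<ge> 0"
proof (cases "u \<ge> 0")
  case True thus ?thesis using key2[OF True assms] by simp
next
  case False
  hence "-u \<ge> 0" by simp
  from key2[OF this assms] False show ?thesis by (simp add: mult_nonpos_nonpos)
qed

lemma Dsign3:
  fixes q u :: real assumes "-1 \<le> q" "q \<le> 0"
  shows "u * (sinh (q*u) - q * sinh u) \<ge> 0"
proof -
  have "u * (sinh ((-q)*u) - (-q) * sinh u) \<le> 0" by (rule Dsign1) (use assms in auto)
  thus ?thesis by (simp add: algebra_simps)
qed

lemma Dsign4: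
  fixes q u :: real assumes "q \<le> -1"
  shows "u * (sinh (q*u) - q * sinh u) \<le> 0"
proof -
  have "u * (sinh ((-q)*u) - (-q) * sinh u) \<ge> 0" by (rule Dsign2) (use assms in auto)
  thus ?thesis by (simp add: algebra_simps)
qed

lemma expm1_sign: fixes t :: real assumes "t \<noteq> 0" shows "0 < t * (exp t - 1)"
proof (cases "t > 0")
  case True thus ?thesis by simp
next
  case False with assms have "t < 0" by simp
  thus ?thesis by (simp add: mult_neg_neg)
qed

lemma ratio_pos: fixes t s :: real assumes "t \<noteq> 0" "s \<noteq> 0"
  shows "0 < s * (exp (s*t) - 1) / (exp t - 1)"
proof -
  have "0 < (s*t) * (exp (s*t) - 1)" by (rule expm1_sign) (use assms in simp)
  moreover have "0 < t * (exp t - 1)" by (rule expm1_sign) (use assms in simp)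
  ultimately have "0 < ((s*t) * (exp (s*t) - 1)) / (t * (exp t - 1))" by (rule divide_pos_pos)
  also have "\<dots> = s * (exp (s*t) - 1) / (exp t - 1)"
  proof -
    have "exp t - 1 \<noteq> 0" using assms by simp
    thus ?thesis using assms by (simp add: field_simps)
  qed
  finally show ?thesis .
qed

lemma identXY:
  fixes X Y Z p :: real
  assumes "Y*Z = X" "Y-1\<noteq>0" "Z-1\<noteq>0"
  shows "p*(Y+1)*(X-1)/(2*(Y-1)) - p*(1-p)*(X-1)^2/((Y-1)*(Z-1))
   = (p*(X-1)/(Y-1)) * ((Z - Y - (1-2*p)*(X-1))/2) / (Z - 1)"
proof -
  have br: "(Y+1)*(Z-1)/2 - (1-p)*(X-1) = (Z - Y - (1-2*p)*(X-1))/2"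
  proof -
    have "(Y+1)*(Z-1) = X + Z - Y - 1" using assms(1) by (simp add: algebra_simps)
    thus ?thesis by (simp add: field_simps)
  qed
  have "p*(Y+1)*(X-1)/(2*(Y-1)) - p*(1-p)*(X-1)^2/((Y-1)*(Z-1))
       = p*(X-1)/((Y-1)*(Z-1)) * ((Y+1)*(Z-1)/2 - (1-p)*(X-1))"
  proof -
    have e1: "p*(Y+1)*(X-1)/(2*(Y-1)) = p*(X-1)/((Y-1)*(Z-1)) * ((Y+1)*(Z-1)/2)"
    proof -
      have g: "\<And>A B C W::real. W \<noteq> 0 \<Longrightarrow> B \<noteq> 0 \<Longrightarrow> A/(B*W) * (C*W/2) = A*C/(2*B)"
        by (simp add: field_simps)
      have "p*(X-1)/((Y-1)*(Z-1)) * ((Y+1)*(Z-1)/2) = p*(X-1)*(Y+1)/(2*(Y-1))"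
        by (rule g) (use assms in auto)
      thus ?thesis by (simp add: mult_ac)
    qed
    have e2: "p*(1-p)*(X-1)^2/((Y-1)*(Z-1)) = p*(X-1)/((Y-1)*(Z-1)) * ((1-p)*(X-1))"
      by (simp add: power2_eq_square)
    show ?thesis unfolding e1 e2 by (simp add: right_diff_distrib)
  qed
  also have "\<dots> = p*(X-1)/((Y-1)*(Z-1)) * ((Z - Y - (1-2*p)*(X-1))/2)" by (simp only: br)
  also have "\<dots> = (p*(X-1)/(Y-1)) * ((Z - Y - (1-2*p)*(X-1))/2) / (Z - 1)"
    by simp
  finally show ?thesis .
qed

lemma sinh_div_le_cosh: fixes u :: real assumes "u \<noteq> 0" shows "sinh u / u \<le> cosh u"
proof (cases "u > 0")
  case True thus ?thesis using key3[of u] by (simp add: divide_le_eq mult.commute)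
next
  case False with assms have "u < 0" by simp
  have "sinh (-u) \<le> (-u) * cosh (-u)" by (rule key3) (use \<open>u<0\<close> in simp)
  hence "u * cosh u \<le> sinh u" by simp
  thus ?thesis using \<open>u<0\<close> by (simp add: divide_le_eq mult.commute)
qed

lemma prod_pos: fixes s t :: real assumes "s \<noteq> 0" "t \<noteq> 0"
  shows "0 < s * (exp (s*t) - 1) * (exp t - 1)"
proof -
  have h1: "0 < (s*t) * (exp (s*t) - 1)" by (rule expm1_sign) (use assms in simp)
  have h2: "0 < t * (exp t - 1)" by (rule expm1_sign) (use assms in simp)
  have "0 < ((s*t) * (exp (s*t) - 1)) * (t * (exp t - 1))" using h1 h2 by simp
  also have "\<dots> = (s * (exp (s*t) - 1) * (exp t - 1)) * t^2" by (simp add: power2_eq_square mult_ac)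
  finally show ?thesis using assms by (simp add: zero_less_mult_iff)
qed

theorem theorem3p1:
  fixes x p :: real
  assumes "x > 0"
  shows "(0 \<le> p \<and> p \<le> 1/2 \<longrightarrow> WYD p x \<ge> Ahat p x)
       \<and> (p \<notin> {0<..<1/2} \<longrightarrow> WYD p x \<le> Ahat p x)"
proof (cases "x = 1")
  case True thus ?thesis by (simp add: Ahat_def WYD_def)
next
  case x1: False
  define u where "u = ln x / 2"
  have xu: "x = exp (2*u)" using assms by (simp add: u_def)
  have u0: "u \<noteq> 0" using x1 xu by auto
  define a where "a = exp u"
  have apos: "a > 0" by (simp add: a_def)
  have xa: "x = a^2" unfolding xu a_def by (simp add: power2_eq_square flip: exp_add)
  show ?thesis
  proof (cases "p = 0")
    case True thus ?thesis by (simp add: Ahat_def WYD_def)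
  next
    case p0: False
    show ?thesis
    proof (cases "p = 1")
      case True
      have lnx: "ln x = 2*u" by (simp add: u_def)
      have "(x - 1) / ln x = a * (sinh u / u)"
        unfolding lnx xa a_def sinh_def using u0
        by (simp add: field_simps power2_eq_square flip: exp_add)
      also have "\<dots> \<le> a * cosh u" using sinh_div_le_cosh[OF u0] apos by (metis mult_left_mono less_imp_le times_divide_eq_right)
      also have "\<dots> = (x + 1) / 2"
        unfolding xa a_def cosh_def
        by (simp add: field_simps power2_eq_square flip: exp_add)
      finally have le: "(x - 1) / ln x \<le> (x + 1) / 2" .
      have A1: "Ahat 1 x = (x+1)/2" using x1 assms by (simp add: Ahat_def field_simps)
      have W1: "WYD 1 x = (x-1)/ln x" using x1 by (simp add: WYD_def)
      have "WYD 1 x \<le> Ahat 1 x" using le A1 W1 by linarith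
      thus ?thesis using True by simp
    next
      case p1: False
      define b where "b = exp (p*u)"
      have bpos: "b > 0" by (simp add: b_def)
      define q where "q = 1 - 2*p"
      have xp: "x powr p = b^2" unfolding xu b_def
        by (simp add: exp_powr_real power2_eq_square flip: exp_add)
      have xp1: "x powr (1-p) = a^2/b^2"
      proof -
        have "x powr (1-p) = exp (2*u - 2*(p*u))" unfolding xu by (simp add: exp_powr_real algebra_simps)
        also have "\<dots> = exp (2*u) / exp (2*(p*u))" by (rule exp_diff)
        also have "\<dots> = a^2/b^2" unfolding a_def b_def by (simp add: power2_eq_square flip: exp_add)
        finally show ?thesis .
      qed
      have sq: "sinh (q*u) = (a/b^2 - b^2/a)/2"
      proof -
        have e1: "exp (q*u) = a/b^2"
        proof -
          have "exp (q*u) = exp (u - (p*u + p*u))" by (simp add: q_def algebra_simps)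
          also have "\<dots> = a/b^2" unfolding a_def b_def unfolding exp_diff exp_add power2_eq_square ..
          finally show ?thesis .
        qed
        have e2: "exp (-(q*u)) = b^2/a" using e1 apos bpos by (simp add: exp_minus)
        show ?thesis unfolding sinh_def e1 e2 by (simp add: scaleR_conv_of_real)
      qed
      have su: "sinh u = (a - 1/a)/2" unfolding sinh_def a_def by (simp add: exp_minus inverse_eq_divide scaleR_conv_of_real)
      define D where "D = sinh (q*u) - q * sinh u"
      define E where "E = exp ((1-p)*(2*u)) - 1"
      define P where "P = p*(a^2-1)/(b^2-1)"
      have b1: "b^2 - 1 \<noteq> 0" using p0 u0 by (simp add: b_def power2_eq_square flip: exp_add)
      have E_eq: "E = a^2/b^2 - 1"
        using xp1 unfolding E_def xu by (simp add: exp_powr_real mult.commute)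
      have E0: "a^2/b^2 - 1 \<noteq> 0"
      proof -
        have "(1-p)*(2*u) \<noteq> 0" using p1 u0 by simp
        hence "E \<noteq> 0" unfolding E_def by simp
        thus ?thesis using E_eq by simp
      qed
      have XYZ: "b^2 * (a^2/b^2) = a^2" using bpos by simp
      have diff: "Ahat p x - WYD p x = P * (a * D) / E"
      proof -
        have "Ahat p x - WYD p x = p*(b^2+1)*(a^2-1)/(2*(b^2-1)) - p*(1-p)*(a^2-1)^2/((b^2-1)*(a^2/b^2-1))"
          using x1 p0 p1 unfolding Ahat_def WYD_def xp xp1 by (simp add: xa)
        also have "\<dots> = P * ((a^2/b^2 - b^2 - (1-2*p)*(a^2-1))/2) / (a^2/b^2 - 1)"
          unfolding P_def by (rule identXY[OF XYZ b1 E0])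
        also have "(a^2/b^2 - b^2 - (1-2*p)*(a^2-1))/2 = a * D"
          unfolding D_def sq su unfolding q_def using apos bpos
          by (simp add: field_simps power2_eq_square)
        finally show ?thesis using E_eq by simp
      qed
      have Ppos: "P > 0"
      proof -
        have "0 < p * (exp (p*(2*u)) - 1) * (exp (2*u) - 1)" by (rule prod_pos) (use p0 u0 in auto)
        moreover have "exp (p*(2*u)) = b^2" unfolding b_def by (simp add: power2_eq_square flip: exp_add)
        moreover have "exp (2*u) = a^2" using xa xu by simp
        ultimately have "0 < p * (b^2 - 1) * (a^2 - 1)" by simp
        moreover have "0 < (b^2-1)^2" using b1 by simp
        ultimately have "0 < (p * (b^2 - 1) * (a^2 - 1)) / (b^2-1)^2" by (rule divide_pos_pos)
        also have "(p * (b^2 - 1) * (a^2 - 1)) / (b^2-1)^2 = P"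
          unfolding P_def using b1 by (simp add: power2_eq_square)
        finally show ?thesis .
      qed
      have diff2: "Ahat p x - WYD p x = (P * a) * ((u*D) / (u*E))"
        using diff u0 by simp
      have PA: "P * a > 0" using Ppos apos by simp
      have H: "0 < ((1-p)*(2*u)) * E" unfolding E_def by (rule expm1_sign) (use p1 u0 in simp)
      have H': "0 < ((1-p)*2) * (u*E)" using H by (simp only: mult_ac)
      have H1: "p < 1 \<Longrightarrow> u*E > 0"
        by (rule zero_less_mult_pos[OF H']) simp
      have H2: "p > 1 \<Longrightarrow> u*E < 0"
      proof -
        assume "p > 1"
        have "0 < ((p-1)*2) * (-(u*E))" using H' by (simp add: algebra_simps)
        hence "0 < -(u*E)" by (rule zero_less_mult_pos) (use \<open>p>1\<close> in simp)
        thus ?thesis by simp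
      qed
      show ?thesis
      proof (intro conjI impI)
        assume "0 \<le> p \<and> p \<le> 1/2"
        hence "0 \<le> q" "q \<le> 1" "p < 1" using p0 by (auto simp: q_def)
        have "u*D \<le> 0" unfolding D_def by (rule Dsign1) fact+
        hence "(u*D)/(u*E) \<le> 0" using H1[OF \<open>p<1\<close>] by (rule divide_nonpos_pos)
        hence "Ahat p x - WYD p x \<le> 0" unfolding diff2 using PA by (metis mult_nonneg_nonpos less_imp_le)
        thus "Ahat p x \<le> WYD p x" by simp
      next
        assume pn: "p \<notin> {0<..<1/2}"
        have "0 \<le> (u*D)/(u*E)"
        proof -
          consider "p < 0" | "1/2 \<le> p \<and> p < 1" | "p > 1" using pn p0 p1 by force
          thus ?thesis
          proof cases
            case 1
            hence "1 \<le> q" by (simp add: q_def)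
            hence "u*D \<ge> 0" unfolding D_def by (rule Dsign2)
            thus ?thesis using H1 1 by (intro divide_nonneg_pos) simp_all
          next
            case 2
            hence "-1 \<le> q" "q \<le> 0" by (auto simp: q_def)
            hence "u*D \<ge> 0" unfolding D_def by (rule Dsign3)
            thus ?thesis using H1 2 by (intro divide_nonneg_pos) simp_all
          next
            case 3
            hence "q \<le> -1" by (simp add: q_def)
            hence "u*D \<le> 0" unfolding D_def by (rule Dsign4)
            thus ?thesis using H2 3 by (intro divide_nonpos_neg) simp_all
          qed
        qed
        hence "0 \<le> Ahat p x - WYD p x" unfolding diff2 using PA by (metis mult_nonneg_nonneg less_imp_le)
        thus "WYD p x \<le> Ahat p x" by simp
      qed
    qed
  qed
qed

end
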